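(* For every integer $n\geq 13$ there exists a neutral graph on $n$ vertices that is not a tree.
   Context: All graphs are finite, simple and connected. For a graph $G=(V,E)$ with $m=|E|\geq 1$ edges, let $d_u$ denote the degree of vertex $u$ and write sums over edges $e_{uv}\in E$ (each edge counted once). The assortativity coefficient of $G$ is $$r(G)=\frac{m^{-1}\sum_{e_{uv}\in E} d_{u}d_{v}-\Big[m^{-1}\sum_{e_{uv}\in E} \tfrac{1}{2}(d_{u}+d_{v})\Big]^{2}}{m^{-1}\sum_{e_{uv}\in E} \tfrac{1}{2}(d^{2}_{u}+d^{2}_{v})-\Big[m^{-1}\sum_{e_{uv}\in E} \tfrac{1}{2}(d_{u}+d_{v})\Big]^{2}},$$ defined whenever the denominator is nonzero. $G$ is called neutral if $r(G)$ is defined and $r(G)=0$. *)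

theory Defs
  imports Complex_Main
begin

definition simple_graph :: "'a set \<Rightarrow> 'a set set \<Rightarrow> bool" where
  "simple_graph V E \<longleftrightarrow> finite V \<and> (\<forall>e\<in>E. \<exists>u v. u \<in> V \<and> v \<in> V \<and> u \<noteq> v \<and> e = {u, v})"

definition adj :: "'a set set \<Rightarrow> 'a \<Rightarrow> 'a \<Rightarrow> bool" where
  "adj E u v \<longleftrightarrow> {u, v} \<in> E"

definition connected_graph :: "'a set \<Rightarrow> 'a set set \<Rightarrow> bool" where
  "connected_graph V E \<longleftrightarrow> V \<noteq> {} \<and>
     (\<forall>u\<in>V. \<forall>v\<in>V. (u, v) \<in> {(x, y). adj E x y}\<^sup>*)"

definition is_cycle :: "'a set set \<Rightarrow> 'a list \<Rightarrow> bool" where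
  "is_cycle E cs \<longleftrightarrow> length cs \<ge> 3 \<and> distinct cs \<and>
     (\<forall>i. Suc i < length cs \<longrightarrow> adj E (cs ! i) (cs ! Suc i)) \<and>
     adj E (last cs) (hd cs)"

definition acyclic_graph :: "'a set set \<Rightarrow> bool" where
  "acyclic_graph E \<longleftrightarrow> \<not> (\<exists>cs. is_cycle E cs)"

definition is_tree :: "'a set \<Rightarrow> 'a set set \<Rightarrow> bool" where
  "is_tree V E \<longleftrightarrow> connected_graph V E \<and> acyclic_graph E"

definition deg :: "'a set set \<Rightarrow> 'a \<Rightarrow> nat" where
  "deg E u = card {v. {u, v} \<in> E}"

text \<open>Sums over edges e = {u,v}, each edge counted once:
  d_u d_v = prod of degrees over e, d_u + d_v = sum over e, d_u^2 + d_v^2 = sum of squares over e.\<close>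
definition assort_num :: "'a set set \<Rightarrow> real" where
  "assort_num E = (let m = real (card E);
      S1 = (\<Sum>e\<in>E. \<Prod>u\<in>e. real (deg E u)) / m;
      S2 = (\<Sum>e\<in>E. (1/2) * (\<Sum>u\<in>e. real (deg E u))) / m
    in S1 - S2\<^sup>2)"

definition assort_den :: "'a set set \<Rightarrow> real" where
  "assort_den E = (let m = real (card E);
      S3 = (\<Sum>e\<in>E. (1/2) * (\<Sum>u\<in>e. real (deg E u) ^ 2)) / m;
      S2 = (\<Sum>e\<in>E. (1/2) * (\<Sum>u\<in>e. real (deg E u))) / m
    in S3 - S2\<^sup>2)"

definition assortativity :: "'a set set \<Rightarrow> real" where
  "assortativity E = assort_num E / assort_den E"

definition neutral :: "'a set set \<Rightarrow> bool" where
  "neutral E \<longleftrightarrow> card E \<ge> 1 \<and> assort_den E \<noteq> 0 \<and> assortativity E = 0"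

end

theory Submission
  imports Defs
begin

definition BB :: "nat \<Rightarrow> nat \<Rightarrow> nat \<Rightarrow> bool" where
  "BB M u v \<longleftrightarrow> (u = M+6 \<and> (v=0 \<or> v=1 \<or> v=M+4 \<or> v=M+5 \<or> v=M+7 \<or> v=M+8)) \<or>
     (u = M+7 \<and> (v=0 \<or> v=M+9 \<or> v=M+10)) \<or> (u = M+8 \<and> (v=M+5 \<or> v=M+11 \<or> v=M+12))"

definition AA :: "nat \<Rightarrow> nat \<Rightarrow> nat \<Rightarrow> bool" where
  "AA M u v \<longleftrightarrow> (u < M+6 \<and> v < M+6 \<and> (u < v \<and> v \<le> u+2 \<or> v < u \<and> u \<le> v+2)) \<or> BB M u v \<or> BB M v u"

definition EE :: "nat \<Rightarrow> nat set set" where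
  "EE M = {{u,v} | u v. AA M u v}"

lemma AA_sym: "AA M u v = AA M v u"
  unfolding AA_def by auto

lemma mem_EE: "{u,v} \<in> EE M \<longleftrightarrow> AA M u v"
proof
  assume "{u,v} \<in> EE M"
  then obtain a b where "{u,v} = {a,b}" "AA M a b" unfolding EE_def by blast
  then show "AA M u v" using AA_sym by (auto simp: doubleton_eq_iff)
qed (auto simp: EE_def)

lemma nbr: "{v. {u,v} \<in> EE M} = {v. AA M u v}"
  by (simp add: mem_EE)

definition dd :: "nat \<Rightarrow> nat \<Rightarrow> nat" where
  "dd M u = (if u = M+6 then 6 else if M+9 \<le> u then 1 else 4)"

lemma AA_props: "AA M u v \<Longrightarrow> u < M+13 \<and> v < M+13 \<and> u \<noteq> v \<and> (dd M u = 4 \<or> dd M v = 4)"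
  unfolding AA_def BB_def dd_def by auto

lemma deg_EE:
  assumes u: "u < M+13"
  shows "deg (EE M) u = dd M u"
proof -
  have c: "card {v. AA M u v} = dd M u"
  proof -
    consider "u = 0" | "u = 1" | k where "u = k+2" "k \<le> M+1" | "u = M+4" | "u = M+5" | "u = M+6"
      | "u = M+7" | "u = M+8" | "u = M+9 \<or> u = M+10" | "u = M+11 \<or> u = M+12"
    proof -
      assume h: "u = 0 \<Longrightarrow> thesis" "u = 1 \<Longrightarrow> thesis" "\<And>k. u = k+2 \<Longrightarrow> k \<le> M+1 \<Longrightarrow> thesis"
        "u = M+4 \<Longrightarrow> thesis" "u = M+5 \<Longrightarrow> thesis" "u = M+6 \<Longrightarrow> thesis"
        "u = M+7 \<Longrightarrow> thesis" "u = M+8 \<Longrightarrow> thesis"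
        "u = M+9 \<or> u = M+10 \<Longrightarrow> thesis" "u = M+11 \<or> u = M+12 \<Longrightarrow> thesis"
      have "u = 0 \<or> u = 1 \<or> (2 \<le> u \<and> u \<le> M+3) \<or> u = M+4 \<or> u = M+5 \<or> u = M+6 \<or>
        u = M+7 \<or> u = M+8 \<or> (u = M+9 \<or> u = M+10) \<or> (u = M+11 \<or> u = M+12)"
        using u by arith
      moreover have "2 \<le> u \<and> u \<le> M+3 \<Longrightarrow> thesis"
        using h(3)[of "u-2"] by auto
      ultimately show thesis using h by blast
    qed
    then show ?thesis
    proof cases
      case 1
      then have "{v. AA M u v} = {1,2,M+6,M+7}" unfolding AA_def BB_def by auto
      then show ?thesis using 1 by (simp add: dd_def)
    next
      case 2
      then have "{v. AA M u v} = {0,2,3,M+6}" unfolding AA_def BB_def by auto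
      then show ?thesis using 2 by (simp add: dd_def)
    next
      case 3
      then have "{v. AA M u v} = {k,k+1,k+3,k+4}" unfolding AA_def BB_def by auto
      then show ?thesis using 3 by (simp add: dd_def)
    next
      case 4
      then have "{v. AA M u v} = {M+2,M+3,M+5,M+6}" unfolding AA_def BB_def by auto
      then show ?thesis using 4 by (simp add: dd_def)
    next
      case 5
      then have "{v. AA M u v} = {M+3,M+4,M+6,M+8}" unfolding AA_def BB_def by auto
      then show ?thesis using 5 by (simp add: dd_def)
    next
      case 6
      then have "{v. AA M u v} = {0,1,M+4,M+5,M+7,M+8}" unfolding AA_def BB_def by auto
      then show ?thesis using 6 by (simp add: dd_def)
    next
      case 7
      then have "{v. AA M u v} = {0,M+6,M+9,M+10}" unfolding AA_def BB_def by auto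
      then show ?thesis using 7 by (simp add: dd_def)
    next
      case 8
      then have "{v. AA M u v} = {M+5,M+6,M+11,M+12}" unfolding AA_def BB_def by auto
      then show ?thesis using 8 by (simp add: dd_def)
    next
      case 9
      then have "{v. AA M u v} = {M+7}" unfolding AA_def BB_def by auto
      then show ?thesis using 9 by (auto simp add: dd_def)
    next
      case 10
      then have "{v. AA M u v} = {M+8}" unfolding AA_def BB_def by auto
      then show ?thesis using 10 by (auto simp add: dd_def)
    qed
  qed
  then show ?thesis by (simp add: deg_def nbr)
qed


lemma sum_edges:
  fixes g :: "'a \<Rightarrow> real"
  assumes fin: "finite V" and sg: "\<forall>e\<in>E. \<exists>u v. u \<in> V \<and> v \<in> V \<and> u \<noteq> v \<and> e = {u,v}"
  shows "(\<Sum>e\<in>E. \<Sum>u\<in>e. g u) = (\<Sum>v\<in>V. real (deg E v) * g v)"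
proof -
  have "E \<subseteq> Pow V" using sg by auto
  then have finE: "finite E" using fin by (meson finite_Pow_iff finite_subset)
  have "(\<Sum>e\<in>E. \<Sum>u\<in>e. g u) = (\<Sum>e\<in>E. \<Sum>u\<in>{u. u \<in> V \<and> u \<in> e}. g u)"
  proof (rule sum.cong)
    fix e assume "e \<in> E"
    then have "{u. u \<in> V \<and> u \<in> e} = e" using sg by auto
    then show "(\<Sum>u\<in>e. g u) = (\<Sum>u\<in>{u. u \<in> V \<and> u \<in> e}. g u)" by simp
  qed simp
  also have "\<dots> = (\<Sum>u\<in>V. \<Sum>e\<in>{e. e \<in> E \<and> u \<in> e}. g u)"
    by (rule sum.swap_restrict[OF finE fin])
  also have "\<dots> = (\<Sum>u\<in>V. real (deg E u) * g u)"
  proof (rule sum.cong)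
    fix u assume "u \<in> V"
    have "bij_betw (\<lambda>v. {u,v}) {v. {u,v} \<in> E} {e. e \<in> E \<and> u \<in> e}"
    proof (rule bij_betwI')
      fix x y assume "x \<in> {v. {u,v} \<in> E}" "y \<in> {v. {u,v} \<in> E}"
      show "({u,x} = {u,y}) = (x = y)" by (auto simp: doubleton_eq_iff)
    next
      fix x assume "x \<in> {v. {u,v} \<in> E}"
      then show "{u,x} \<in> {e. e \<in> E \<and> u \<in> e}" by simp
    next
      fix e assume e: "e \<in> {e. e \<in> E \<and> u \<in> e}"
      then obtain a b where ab: "e = {a,b}" using sg by blast
      show "\<exists>x\<in>{v. {u,v} \<in> E}. e = {u,x}"
      proof (cases "u = a")
        case True
        then show ?thesis using e ab by auto
      next
        case False
        then have "u = b" using e ab by auto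
        then show ?thesis using e ab by (auto simp: insert_commute)
      qed
    qed
    then have "card {e. e \<in> E \<and> u \<in> e} = deg E u"
      unfolding deg_def by (simp add: bij_betw_same_card)
    then show "(\<Sum>e\<in>{e. e \<in> E \<and> u \<in> e}. g u) = real (deg E u) * g u" by simp
  qed simp
  finally show ?thesis .
qed

lemma sumV:
  fixes f :: "nat \<Rightarrow> real"
  shows "(\<Sum>v\<in>{0..<M+13}. f (dd M v)) = real (M+8) * f 4 + f 6 + 4 * f 1"
proof -
  have "(\<Sum>v\<in>{0..<M+13}. f (dd M v)) = (\<Sum>v\<in>{0..<M+6}. f (dd M v)) + (\<Sum>v\<in>{M+6..<M+13}. f (dd M v))"
    by (rule sum.atLeastLessThan_concat[symmetric]) auto
  also have "(\<Sum>v\<in>{0..<M+6}. f (dd M v)) = (\<Sum>v\<in>{0..<M+6}. f 4)"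
    by (rule sum.cong) (auto simp: dd_def)
  also have "{M+6..<M+13} = {M+6,M+7,M+8,M+9,M+10,M+11,M+12}" by auto
  also have "(\<Sum>v\<in>{M+6,M+7,M+8,M+9,M+10,M+11,M+12}. f (dd M v)) = f 6 + 2 * f 4 + 4 * f 1"
    by (simp add: dd_def)
  finally show ?thesis by (simp add: algebra_simps)
qed

theorem theorem4:
  fixes n :: nat
  assumes "n \<ge> 13"
  shows "\<exists>(V :: nat set) (E :: nat set set).
           card V = n \<and> simple_graph V E \<and> connected_graph V E \<and>
           neutral E \<and> \<not> is_tree V E"
proof -
  obtain M where n: "n = M + 13" using assms by (metis add.commute le_Suc_ex)
  define V where "V = {0..<M+13}"
  define E where "E = EE M"
  have adjE: "adj E x y \<longleftrightarrow> AA M x y" for x y by (simp add: adj_def E_def mem_EE)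
  have cardV: "card V = n" by (simp add: V_def n)
  have sg0: "\<forall>e\<in>E. \<exists>u v. u \<in> V \<and> v \<in> V \<and> u \<noteq> v \<and> e = {u,v}"
  proof
    fix e assume "e \<in> E"
    then obtain u v where "e = {u,v}" "AA M u v" unfolding E_def EE_def by blast
    then show "\<exists>u v. u \<in> V \<and> v \<in> V \<and> u \<noteq> v \<and> e = {u,v}"
      using AA_props[of M u v] by (auto simp: V_def)
  qed
  have finV: "finite V" by (simp add: V_def)
  have sg: "simple_graph V E" using sg0 finV by (simp add: simple_graph_def)
  have finE: "finite E"
  proof -
    have "E \<subseteq> Pow V" using sg0 by auto
    then show ?thesis using finV by (meson finite_Pow_iff finite_subset)
  qed
  define R where "R = {(x, y). adj E x y}"
  have symR: "sym R" unfolding R_def sym_def adjE using AA_sym by auto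
  have RI: "AA M x y \<Longrightarrow> (x,y) \<in> R" for x y by (simp add: R_def adjE)
  have core: "i < M+6 \<Longrightarrow> (0,i) \<in> R\<^sup>*" for i
  proof (induction i)
    case 0 then show ?case by simp
  next
    case (Suc i)
    then have "(0,i) \<in> R\<^sup>*" by simp
    moreover have "(i, Suc i) \<in> R" using Suc.prems by (intro RI) (simp add: AA_def)
    ultimately show ?case by (rule rtrancl_into_rtrancl)
  qed
  have from0: "(0,v) \<in> R\<^sup>*" if "v \<in> V" for v
  proof -
    have h6: "(0,M+6) \<in> R\<^sup>*" by (rule r_into_rtrancl, rule RI) (simp add: AA_def BB_def)
    have h7: "(0,M+7) \<in> R\<^sup>*" by (rule r_into_rtrancl, rule RI) (simp add: AA_def BB_def)
    have h8: "(0,M+8) \<in> R\<^sup>*" by (rule rtrancl_into_rtrancl[OF h6], rule RI) (simp add: AA_def BB_def)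
    have h9: "(0,M+9) \<in> R\<^sup>*" by (rule rtrancl_into_rtrancl[OF h7], rule RI) (simp add: AA_def BB_def)
    have h10: "(0,M+10) \<in> R\<^sup>*" by (rule rtrancl_into_rtrancl[OF h7], rule RI) (simp add: AA_def BB_def)
    have h11: "(0,M+11) \<in> R\<^sup>*" by (rule rtrancl_into_rtrancl[OF h8], rule RI) (simp add: AA_def BB_def)
    have h12: "(0,M+12) \<in> R\<^sup>*" by (rule rtrancl_into_rtrancl[OF h8], rule RI) (simp add: AA_def BB_def)
    have "v < M+6 \<or> v = M+6 \<or> v = M+7 \<or> v = M+8 \<or> v = M+9 \<or> v = M+10 \<or> v = M+11 \<or> v = M+12"
      using that by (auto simp: V_def)
    then show ?thesis using core h6 h7 h8 h9 h10 h11 h12 by auto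
  qed
  have conn: "connected_graph V E"
    unfolding connected_graph_def
  proof (intro conjI ballI)
    show "V \<noteq> {}" by (auto simp: V_def)
  next
    fix u v assume "u \<in> V" "v \<in> V"
    have "(u,0) \<in> R\<^sup>*" using from0[OF \<open>u \<in> V\<close>] sym_rtrancl[OF symR] by (auto simp: sym_def)
    then show "(u, v) \<in> {(x, y). adj E x y}\<^sup>*" using from0[OF \<open>v \<in> V\<close>] unfolding R_def by simp
  qed
  have cyc: "is_cycle E [0,1,2]"
    unfolding is_cycle_def adjE by (auto simp: AA_def nth_Cons split: nat.splits)
  have nottree: "\<not> is_tree V E" using cyc by (auto simp: is_tree_def acyclic_graph_def)
  define d where "d u = real (deg E u)" for u
  have degV: "u \<in> V \<Longrightarrow> deg E u = dd M u" for u unfolding E_def V_def by (simp add: deg_EE)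
  have SV: "(\<Sum>v\<in>V. real (deg E v) * g (deg E v)) = real (M+8) * (4 * g 4) + 6 * g 6 + 4 * g 1"
    for g :: "nat \<Rightarrow> real"
  proof -
    have "(\<Sum>v\<in>V. real (deg E v) * g (deg E v)) = (\<Sum>v\<in>{0..<M+13}. (\<lambda>x. real x * g x) (dd M v))"
      by (rule sum.cong) (auto simp: V_def degV)
    also have "\<dots> = real (M+8) * (4 * g 4) + 6 * g 6 + 4 * g 1"
      by (subst sumV) simp
    finally show ?thesis .
  qed
  have T1: "(\<Sum>e\<in>E. \<Sum>u\<in>e. (1::real)) = 4 * real M + 42"
    using sum_edges[OF finV sg0, of "\<lambda>_. 1"] SV[of "\<lambda>_. 1"] by simp
  have T1': "(\<Sum>e\<in>E. \<Sum>u\<in>e. (1::real)) = 2 * real (card E)"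
  proof -
    have "(\<Sum>e\<in>E. \<Sum>u\<in>e. (1::real)) = (\<Sum>e\<in>E. 2)"
    proof (rule sum.cong)
      fix e assume "e \<in> E" then obtain u v where "u \<noteq> v" "e = {u,v}" using sg0 by blast
      then show "(\<Sum>u\<in>e. (1::real)) = 2" by simp
    qed simp
    then show ?thesis by simp
  qed
  have m: "real (card E) = 2 * real M + 21" using T1 T1' by simp
  have T2: "(\<Sum>e\<in>E. \<Sum>u\<in>e. d u) = 16 * real M + 168"
    using sum_edges[OF finV sg0, of d] SV[of real] by (simp add: d_def)
  have T3: "(\<Sum>e\<in>E. \<Sum>u\<in>e. d u ^ 2) = 64 * real M + 732"
    using sum_edges[OF finV sg0, of "\<lambda>u. d u ^ 2"] SV[of "\<lambda>x. real x ^ 2"] by (simp add: d_def)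
  have prodE: "(\<Prod>u\<in>e. d u) = 4 * (\<Sum>u\<in>e. d u) - 16" if eE: "e \<in> E" for e
  proof -
    obtain u v where uv: "e = {u,v}" "AA M u v" using eE unfolding E_def EE_def by blast
    have P: "u \<in> V" "v \<in> V" "u \<noteq> v" "dd M u = 4 \<or> dd M v = 4"
      using AA_props[OF uv(2)] by (auto simp: V_def)
    then have "d u = 4 \<or> d v = 4" by (auto simp: d_def degV)
    then show ?thesis using uv(1) P(3) by (auto simp: algebra_simps)
  qed
  have S1: "(\<Sum>e\<in>E. \<Prod>u\<in>e. d u) = 4 * (16 * real M + 168) - 16 * (2 * real M + 21)"
  proof -
    have "(\<Sum>e\<in>E. \<Prod>u\<in>e. d u) = (\<Sum>e\<in>E. 4 * (\<Sum>u\<in>e. d u) - 16)"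
      by (rule sum.cong) (auto simp: prodE)
    also have "\<dots> = 4 * (\<Sum>e\<in>E. \<Sum>u\<in>e. d u) - 16 * real (card E)"
      by (simp add: sum_subtractf sum_distrib_left)
    finally show ?thesis using T2 m by simp
  qed
  have S2: "(\<Sum>e\<in>E. (1/2) * (\<Sum>u\<in>e. d u)) = (1/2) * (16 * real M + 168)"
    using T2 by (simp only: sum_distrib_left[symmetric])
  have S3: "(\<Sum>e\<in>E. (1/2) * (\<Sum>u\<in>e. d u ^ 2)) = (1/2) * (64 * real M + 732)"
    using T3 by (simp only: sum_distrib_left[symmetric])
  have S1r: "(\<Sum>e\<in>E. \<Prod>u\<in>e. real (deg E u)) = 32 * real M + 336"
    using S1 unfolding d_def by simp
  have S2r: "(\<Sum>e\<in>E. (1/2) * (\<Sum>u\<in>e. real (deg E u))) = 8 * real M + 84"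
    using S2 unfolding d_def by simp
  have S3r: "(\<Sum>e\<in>E. (1/2) * (\<Sum>u\<in>e. real (deg E u) ^ 2)) = 32 * real M + 366"
    using S3 unfolding d_def by simp
  have pos: "2 * real M + 21 \<noteq> 0" by (simp add: add_nonneg_eq_0_iff)
  have num: "assort_num E = 0"
  proof -
    have a: "(32 * real M + 336) / (2 * real M + 21) = 16" using pos by (simp add: field_simps)
    have b: "(8 * real M + 84) / (2 * real M + 21) = 4" using pos by (simp add: field_simps)
    show ?thesis unfolding assort_num_def Let_def S1r S2r m a b by simp
  qed
  have den: "assort_den E \<noteq> 0"
  proof -
    have b: "(8 * real M + 84) / (2 * real M + 21) = 4" using pos by (simp add: field_simps)
    have c: "(32 * real M + 366) / (2 * real M + 21) \<noteq> 16" using pos by (simp add: field_simps)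
    show ?thesis unfolding assort_den_def Let_def S3r S2r m b using c by simp
  qed
  have "card E \<ge> 1" using m by linarith
  then have neut: "neutral E" using num den by (simp add: neutral_def assortativity_def)
  show ?thesis using cardV sg conn neut nottree by blast
qed

end
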